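(* In the standing setting, suppose $0<\alpha_k\le\frac1{2M\tilde L}$ for all $k\ge0$. Fix $\ell\in\{1,\dots,N\}$ and $n\ge0$, and define the numbers $A_k,B_k,C_k$ ($0\le k\le n$) as in the context. Then for every $k\in\{0,\dots,n\}$, almost surely $$\mathbb{E}[\langle x_{n+1}-x_*,v_\ell\rangle^2\mid x_k]\le A_k\langle x_k-x_*,v_\ell\rangle^2+B_k\|x_k-x_*\|^2+C_k.$$ In particular (case $k=0$), $\mathbb{E}[\langle x_{n+1}-x_*,v_\ell\rangle^2]\le A_0\langle x_0-x_*,v_\ell\rangle^2+B_0\|x_0-x_*\|^2+C_0$.
   Context: Standing setting: $M\ge N$, $A\in\mathbb{R}^{M\times N}$ of full column rank with rows $a_1,\dots,a_M$, $b\in\mathbb{R}^M$, $F(x)=\tfrac12\|Ax-b\|^2$, $x_*$ the unique minimizer, $F_*=F(x_* )$. Singular values $\sigma_1\ge\dots\ge\sigma_N>0$ with orthonormal right singular vectors $v_1,\dots,v_N$; $\sigma_{\max}=\sigma_1$, $\sigma_{\min}=\sigma_N$, $c(A)=\sigma_{\max}^2/\sigma_{\min}^2$, $\tilde L=\max_i\|a_i\|^2$. $f_i(x)=\frac M2(\langle a_i,x\rangle-b_i)^2$; $\sigma^2=\frac1M\sum_i\|\nabla f_i(x_* )\|^2$. SGD: deterministic $x_0$, deterministic step sizes $\alpha_k>0$, $i_k$ i.i.d. uniform on $\{1,\dots,M\}$, $x_{k+1}=x_k-\alpha_k\nabla f_{i_k}(x_k)$. For $\alpha>0$ put $A(\alpha)=1-2\alpha\sigma_\ell^2$,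 $B(\alpha)=\alpha^2M\tilde Lc(A)\sigma_{\max}^2$, $C(\alpha)=2\alpha^2M\tilde LF_*$, $p(\alpha)=1-\alpha\sigma_{\min}^2$, $q(\alpha)=2\alpha^2\sigma^2$. For fixed $n$ and $0\le k\le n$: $A_k=\prod_{i=k}^nA(\alpha_i)$; $B_k=\sum_{j=k}^n\Big(\prod_{i=j+1}^nA(\alpha_i)\Big)B(\alpha_j)\Big(\prod_{i=k}^{j-1}p(\alpha_i)\Big)$; $C_k=\sum_{i=k+1}^n\big(q(\alpha_{i-1})B_i+A_iC(\alpha_{i-1})\big)+C(\alpha_n)$ (empty products equal $1$, empty sums $0$). *)

theory Defs
  imports "HOL-Analysis.Analysis" "HOL-Probability.Probability"
begin

text \<open>Rows of A are A $ i, i :: 'm; M = CARD('m), N = CARD('n).\<close>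

definition lsF :: "real^'n^'m \<Rightarrow> real^'m \<Rightarrow> real^'n \<Rightarrow> real" where
  "lsF A b x = (1/2) * (norm (A *v x - b))^2"

text \<open>Gradient of f_i(x) = M/2 (<a_i,x> - b_i)^2.\<close>
definition grad_f :: "real^'n^'m \<Rightarrow> real^'m \<Rightarrow> 'm \<Rightarrow> real^'n \<Rightarrow> real^'n" where
  "grad_f A b i x = (real CARD('m) * ((A $ i) \<bullet> x - b $ i)) *\<^sub>R (A $ i)"

definition Ltil :: "real^'n^'m \<Rightarrow> real" where
  "Ltil A = Max (range (\<lambda>i. (norm (A $ i))^2))"

definition noise_var :: "real^'n^'m \<Rightarrow> real^'m \<Rightarrow> real^'n \<Rightarrow> real" where
  "noise_var A b xs = (1 / real CARD('m)) * (\<Sum>i\<in>UNIV. (norm (grad_f A b i xs))^2)"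

text \<open>SGD iterates as functions of the index sequence \<omega> (\<omega> k = i_k).\<close>
primrec sgd :: "real^'n^'m \<Rightarrow> real^'m \<Rightarrow> real^'n \<Rightarrow> (nat \<Rightarrow> real) \<Rightarrow> nat \<Rightarrow> (nat \<Rightarrow> 'm) \<Rightarrow> real^'n" where
  "sgd A b x0 \<alpha> 0 \<omega> = x0"
| "sgd A b x0 \<alpha> (Suc k) \<omega> = sgd A b x0 \<alpha> k \<omega> - \<alpha> k *\<^sub>R grad_f A b (\<omega> k) (sgd A b x0 \<alpha> k \<omega>)"

definition idx_space :: "(nat \<Rightarrow> 'm::finite) measure" where
  "idx_space = PiM UNIV (\<lambda>_. measure_pmf (pmf_of_set (UNIV :: 'm set)))"

text \<open>The scalar functions A(\<alpha>),...,q(\<alpha>); parameters: sl = \<sigma>_l, smax, smin, M = m,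
  Lt = \<tilde>L, Fs = F_*, s2 = \<sigma>^2.\<close>
definition Afun :: "real \<Rightarrow> real \<Rightarrow> real" where "Afun sl a = 1 - 2 * a * sl^2"
definition Bfun :: "real \<Rightarrow> real \<Rightarrow> real \<Rightarrow> real \<Rightarrow> real \<Rightarrow> real" where
  "Bfun m Lt smax smin a = a^2 * m * Lt * (smax^2 / smin^2) * smax^2"
definition Cfun :: "real \<Rightarrow> real \<Rightarrow> real \<Rightarrow> real \<Rightarrow> real" where
  "Cfun m Lt Fs a = 2 * a^2 * m * Lt * Fs"
definition pfun :: "real \<Rightarrow> real \<Rightarrow> real" where "pfun smin a = 1 - a * smin^2"
definition qfun :: "real \<Rightarrow> real \<Rightarrow> real" where "qfun s2 a = 2 * a^2 * s2"

definition Acoef :: "real \<Rightarrow> (nat \<Rightarrow> real) \<Rightarrow> nat \<Rightarrow> nat \<Rightarrow> real" where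
  "Acoef sl \<alpha> n k = (\<Prod>i=k..n. Afun sl (\<alpha> i))"

definition Bcoef :: "real \<Rightarrow> real \<Rightarrow> real \<Rightarrow> real \<Rightarrow> real \<Rightarrow> (nat \<Rightarrow> real) \<Rightarrow> nat \<Rightarrow> nat \<Rightarrow> real" where
  "Bcoef sl m Lt smax smin \<alpha> n k =
     (\<Sum>j=k..n. (\<Prod>i=j+1..n. Afun sl (\<alpha> i)) * Bfun m Lt smax smin (\<alpha> j)
                 * (\<Prod>i=k..<j. pfun smin (\<alpha> i)))"

definition Ccoef :: "real \<Rightarrow> real \<Rightarrow> real \<Rightarrow> real \<Rightarrow> real \<Rightarrow> real \<Rightarrow> real \<Rightarrow> (nat \<Rightarrow> real) \<Rightarrow> nat \<Rightarrow> nat \<Rightarrow> real" where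
  "Ccoef sl m Lt smax smin Fs s2 \<alpha> n k =
     (\<Sum>i=k+1..n. qfun s2 (\<alpha> (i-1)) * Bcoef sl m Lt smax smin \<alpha> n i
                 + Acoef sl \<alpha> n i * Cfun m Lt Fs (\<alpha> (i-1))) + Cfun m Lt Fs (\<alpha> n)"

end

theory Submission
  imports Defs
begin


lemma Av_comp: "(A *v x) $ c = (A $ c) \<bullet> (x::real^'n)"
  by (simp add: matrix_vector_mul_component)

lemma Av_inner: "(A *v y) \<bullet> (A *v z) = (\<Sum>c\<in>UNIV. ((A::real^'n^'m) $ c \<bullet> y) * (A $ c \<bullet> z))"
  by (simp add: inner_vec_def matrix_vector_mul_component)

lemma inner_Av: "(A *v (y::real^'n)) \<bullet> w = y \<bullet> (transpose (A::real^'n^'m) *v w)"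
  by (metis dot_lmul_matrix inner_commute transpose_matrix_vector)

lemma inner_vec_sum: "(u::real^'m) \<bullet> w = (\<Sum>c\<in>UNIV. u$c * w$c)"
  by (simp add: inner_vec_def)

locale sgdloc =
  fixes A :: "real^'n^'m" and b :: "real^'m" and xs :: "real^'n"
    and \<sigma> :: "nat \<Rightarrow> real" and v :: "nat \<Rightarrow> real^'n"
    and \<alpha> :: "nat \<Rightarrow> real" and l :: nat
  assumes xs_min: "\<forall>y. lsF A b xs \<le> lsF A b y"
    and orth: "\<forall>i\<in>{1..CARD('n)}. \<forall>j\<in>{1..CARD('n)}. v i \<bullet> v j = (if i = j then 1 else 0)"
    and sv: "\<forall>j\<in>{1..CARD('n)}. transpose A *v (A *v v j) = (\<sigma> j)^2 *\<^sub>R v j"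
    and sv_pos: "\<forall>j\<in>{1..CARD('n)}. \<sigma> j > 0"
    and sv_ord: "\<forall>i\<in>{1..CARD('n)}. \<forall>j\<in>{1..CARD('n)}. i \<le> j \<longrightarrow> \<sigma> j \<le> \<sigma> i"
    and step: "\<forall>k. 0 < \<alpha> k \<and> \<alpha> k \<le> 1 / (2 * real CARD('m) * Ltil A)"
    and l: "1 \<le> l" "l \<le> CARD('n)"
begin

definition "r = A *v xs - b"
abbreviation "L \<equiv> Ltil A"

lemma normal_eq: "(A *v z) \<bullet> r = 0"
proof -
  define u where "u = (A *v z) \<bullet> r"
  define c where "c = (A *v z) \<bullet> (A *v z)"
  have c0: "c \<ge> 0" unfolding c_def by simp
  define t where "t = - u / (c + 1)"
  have "lsF A b xs \<le> lsF A b (xs + t *\<^sub>R z)" using xs_min by blast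
  moreover have "lsF A b xs = (1/2) * (r \<bullet> r)"
    by (simp add: lsF_def r_def power2_norm_eq_inner)
  moreover have "lsF A b (xs + t *\<^sub>R z) = (1/2) * (r \<bullet> r) + t * u + (1/2) * t^2 * c"
  proof -
    have "A *v (xs + t *\<^sub>R z) - b = r + t *\<^sub>R (A *v z)"
      by (simp add: r_def matrix_vector_right_distrib matrix_vector_mult_scaleR algebra_simps)
    thus ?thesis unfolding lsF_def power2_norm_eq_inner
      by (simp add: inner_add_left inner_add_right u_def c_def
          inner_commute algebra_simps power2_eq_square)
  qed
  ultimately have "0 \<le> t * u + (1/2) * t^2 * c" by simp
  moreover have tc: "u = - t * (c+1)" using c0 by (simp add: t_def)
  ultimately have "t^2 * (c/2 + 1) \<le> 0" by (simp add: algebra_simps power2_eq_square)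
  moreover have "c/2 + 1 > 0" using c0 by simp
  ultimately have "t^2 \<le> 0" by (smt (verit) mult_pos_pos zero_less_power2)
  hence "t = 0" by simp
  hence "u = 0" using tc by simp
  thus ?thesis by (simp add: u_def)
qed

lemma r_comp: "r $ c = A $ c \<bullet> xs - b $ c"
  by (simp add: r_def Av_comp)

lemma row_le_L: "(norm (A $ c))^2 \<le> L"
  unfolding Ltil_def by (rule Max_ge) auto

lemma L_pos: "L > 0"
proof (rule ccontr)
  assume "\<not> L > 0"
  moreover have "L \<ge> 0" using row_le_L[of undefined] by (meson order.trans zero_le_power2)
  ultimately have "L = 0" by simp
  thus False using step by (metis div_by_0 mult_zero_right not_le order.strict_trans2 order.refl)
qed

lemma alpha_ML: "\<alpha> k * real CARD('m) * L \<le> 1/2"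
proof -
  have "\<alpha> k \<le> 1 / (2 * real CARD('m) * L)" using step by blast
  hence "\<alpha> k * (2 * real CARD('m) * L) \<le> 1" using L_pos
    by (simp add: field_simps)
  thus ?thesis by simp
qed

lemma alpha_pos: "\<alpha> k > 0" using step by blast

lemma v_norm: "j \<in> {1..CARD('n)} \<Longrightarrow> v j \<bullet> v j = 1" using orth by auto

lemma sigma_sq: "j \<in> {1..CARD('n)} \<Longrightarrow> (A *v v j) \<bullet> (A *v v j) = (\<sigma> j)^2"
  using sv v_norm by (simp add: inner_Av)

lemma expansion: "y = (\<Sum>j\<in>{1..CARD('n)}. (y \<bullet> v j) *\<^sub>R v j)"
proof -
  let ?S = "v ` {1..CARD('n)}"
  have inj: "inj_on v {1..CARD('n)}"
  proof (rule inj_onI)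
    fix i j assume "i \<in> {1..CARD('n)}" "j \<in> {1..CARD('n)}" "v i = v j"
    thus "i = j" using orth by (metis one_neq_zero)
  qed
  have "pairwise orthogonal ?S"
    unfolding pairwise_def orthogonal_def using orth by auto
  moreover have "0 \<notin> ?S" using v_norm by force
  ultimately have ind: "independent ?S" by (rule pairwise_orthogonal_independent)
  have "card ?S = CARD('n)" using inj by (simp add: card_image)
  hence "UNIV \<subseteq> span ?S"
    using card_ge_dim_independent[OF subset_UNIV ind] by (simp add: dim_UNIV)
  define z where "z = y - (\<Sum>j\<in>{1..CARD('n)}. (y \<bullet> v j) *\<^sub>R v j)"
  have zo: "z \<bullet> v i = 0" if "i \<in> {1..CARD('n)}" for i
  proof -
    have "(\<Sum>j\<in>{1..CARD('n)}. (y \<bullet> v j) *\<^sub>R v j) \<bullet> v i = (\<Sum>j\<in>{1..CARD('n)}. (y \<bullet> v j) * (v j \<bullet> v i))"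
      by (simp add: inner_sum_left)
    also have "\<dots> = (\<Sum>j\<in>{1..CARD('n)}. if j = i then y \<bullet> v i else 0)"
      using orth that by (intro sum.cong) auto
    also have "\<dots> = y \<bullet> v i" using that by simp
    finally show ?thesis by (simp add: z_def inner_diff_left)
  qed
  have "z \<in> span ?S" using \<open>UNIV \<subseteq> span ?S\<close> by blast
  hence "orthogonal z z"
    by (rule orthogonal_to_span) (use zo in \<open>auto simp: orthogonal_def\<close>)
  hence "z = 0" by (simp add: orthogonal_def)
  thus ?thesis by (simp add: z_def)
qed

end



lemma mv_sum: "(A::real^'n^'m) *v (\<Sum>j\<in>S. f j) = (\<Sum>j\<in>S. A *v f j)"
  by (induction S rule: infinite_finite_induct) (auto simp: matrix_vector_right_distrib)

context sgdloc begin

lemma ATA_expand: "transpose A *v (A *v y) = (\<Sum>j\<in>{1..CARD('n)}. ((y \<bullet> v j) * (\<sigma> j)^2) *\<^sub>R v j)"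
proof -
  have "transpose A *v (A *v y) = transpose A *v (A *v (\<Sum>j\<in>{1..CARD('n)}. (y \<bullet> v j) *\<^sub>R v j))"
    using expansion[of y] by simp
  also have "\<dots> = (\<Sum>j\<in>{1..CARD('n)}. (y \<bullet> v j) *\<^sub>R (transpose A *v (A *v v j)))"
    by (simp add: mv_sum matrix_vector_mult_scaleR)
  also have "\<dots> = (\<Sum>j\<in>{1..CARD('n)}. ((y \<bullet> v j) * (\<sigma> j)^2) *\<^sub>R v j)"
    using sv by (intro sum.cong) auto
  finally show ?thesis .
qed

lemma inner_expand: "y \<bullet> (\<Sum>j\<in>{1..CARD('n)}. c j *\<^sub>R v j) = (\<Sum>j\<in>{1..CARD('n)}. c j * (y \<bullet> v j))"
  by (simp add: inner_sum_right)

lemma normAy: "(A *v y) \<bullet> (A *v y) = (\<Sum>j\<in>{1..CARD('n)}. (\<sigma> j)^2 * (y \<bullet> v j)^2)"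
  unfolding inner_Av ATA_expand inner_expand
  by (intro sum.cong) (auto simp: power2_eq_square)

lemma normy: "y \<bullet> y = (\<Sum>j\<in>{1..CARD('n)}. (y \<bullet> v j)^2)"
proof -
  have "y \<bullet> y = y \<bullet> (\<Sum>j\<in>{1..CARD('n)}. (y \<bullet> v j) *\<^sub>R v j)" using expansion[of y] by simp
  thus ?thesis unfolding inner_expand by (simp add: power2_eq_square)
qed

lemma sig_bounds: "j \<in> {1..CARD('n)} \<Longrightarrow> (\<sigma> CARD('n))^2 \<le> (\<sigma> j)^2 \<and> (\<sigma> j)^2 \<le> (\<sigma> 1)^2"
proof -
  assume j: "j \<in> {1..CARD('n)}"
  have n1: "CARD('n) \<in> {1..CARD('n)}" "1 \<in> {1..CARD('n)}" by auto
  have "\<sigma> CARD('n) \<le> \<sigma> j" "\<sigma> j \<le> \<sigma> 1" using sv_ord j n1 by auto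
  moreover have "\<sigma> CARD('n) > 0" "\<sigma> j > 0" using sv_pos j n1 by auto
  ultimately show ?thesis by (auto intro: power_mono)
qed

lemma Ay_upper: "(A *v y) \<bullet> (A *v y) \<le> (\<sigma> 1)^2 * (y \<bullet> y)"
  unfolding normAy normy sum_distrib_left
  by (rule sum_mono) (use sig_bounds in \<open>auto intro: mult_right_mono\<close>)

lemma Ay_lower: "(\<sigma> CARD('n))^2 * (y \<bullet> y) \<le> (A *v y) \<bullet> (A *v y)"
  unfolding normAy normy sum_distrib_left
  by (rule sum_mono) (use sig_bounds in \<open>auto intro: mult_right_mono\<close>)

lemma sig1_ge: "(\<sigma> CARD('n))^2 \<le> (\<sigma> 1)^2" using sig_bounds[of 1] by auto
lemma sigN_pos: "\<sigma> CARD('n) > 0" using sv_pos by auto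

lemma sigma_le_ML: "j \<in> {1..CARD('n)} \<Longrightarrow> (\<sigma> j)^2 \<le> real CARD('m) * L"
proof -
  assume j: "j \<in> {1..CARD('n)}"
  have "(\<sigma> j)^2 = (\<Sum>c\<in>UNIV. (A$c \<bullet> v j)^2)"
    using sigma_sq[OF j] by (simp add: Av_inner power2_eq_square)
  also have "\<dots> \<le> (\<Sum>c\<in>(UNIV::'m set). L)"
  proof (rule sum_mono)
    fix c
    have "(A$c \<bullet> v j)^2 \<le> (A$c \<bullet> A$c) * (v j \<bullet> v j)"
      by (metis Cauchy_Schwarz_ineq)
    also have "\<dots> = (norm (A$c))^2" using v_norm[OF j] by (simp add: power2_norm_eq_inner)
    also have "\<dots> \<le> L" by (rule row_le_L)
    finally show "(A$c \<bullet> v j)^2 \<le> L" .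
  qed
  finally show ?thesis by simp
qed

lemma Afun_nonneg: "Afun (\<sigma> l) (\<alpha> k) \<ge> 0"
proof -
  have "(\<sigma> l)^2 \<le> real CARD('m) * L" using sigma_le_ML l by auto
  hence "\<alpha> k * (\<sigma> l)^2 \<le> \<alpha> k * (real CARD('m) * L)" using alpha_pos[of k] by simp
  thus ?thesis using alpha_ML[of k] by (simp add: Afun_def algebra_simps)
qed

lemma pfun_nonneg: "pfun (\<sigma> CARD('n)) (\<alpha> k) \<ge> 0"
proof -
  have "(\<sigma> CARD('n))^2 \<le> real CARD('m) * L" using sigma_le_ML by auto
  hence "\<alpha> k * (\<sigma> CARD('n))^2 \<le> \<alpha> k * (real CARD('m) * L)" using alpha_pos[of k] by simp
  thus ?thesis using alpha_ML[of k] by (simp add: pfun_def algebra_simps)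
qed

lemma Bfun_nonneg: "Bfun (real CARD('m)) L s1 s2 a \<ge> 0"
  using L_pos by (simp add: Bfun_def)

end



context sgdloc begin

lemma D_eq: "A *v x - b = A *v (x - xs) + r"
  by (simp add: r_def matrix_vector_mult_diff_distrib)

lemma D_comp: "(A *v x - b) $ c = A$c \<bullet> x - b$c"
  by (simp add: Av_comp)

lemma sum_Dw: "(\<Sum>c\<in>UNIV. (A *v x - b)$c * (A$c \<bullet> y)) = (A *v (x - xs)) \<bullet> (A *v y)"
proof -
  have "(\<Sum>c\<in>UNIV. (A *v x - b)$c * (A$c \<bullet> y)) = (A *v x - b) \<bullet> (A *v y)"
    by (simp add: inner_vec_sum Av_comp)
  also have "\<dots> = (A *v (x - xs)) \<bullet> (A *v y)"
    unfolding D_eq inner_add_left using normal_eq[of y] by (simp add: inner_commute)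
  finally show ?thesis .
qed

lemma DD: "(A *v x - b) \<bullet> (A *v x - b) = (A *v (x - xs)) \<bullet> (A *v (x - xs)) + r \<bullet> r"
  unfolding D_eq inner_add_left inner_add_right using normal_eq[of "x - xs"]
  by (simp add: inner_commute)

lemma Fstar: "lsF A b xs = (1/2) * (r \<bullet> r)"
  by (simp add: lsF_def r_def power2_norm_eq_inner)

lemma w_le: "j \<in> {1..CARD('n)} \<Longrightarrow> (A$c \<bullet> v j)^2 \<le> L"
proof -
  assume j: "j \<in> {1..CARD('n)}"
  have "(A$c \<bullet> v j)^2 \<le> (A$c \<bullet> A$c) * (v j \<bullet> v j)"
    by (metis Cauchy_Schwarz_ineq)
  also have "\<dots> = (norm (A$c))^2" using v_norm[OF j] by (simp add: power2_norm_eq_inner)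
  also have "\<dots> \<le> L" by (rule row_le_L)
  finally show ?thesis .
qed

lemma sq_expand: "(\<Sum>c\<in>UNIV. (E - t c)^2) = real CARD('m) * E^2 - 2 * E * (\<Sum>c\<in>UNIV. t c) + (\<Sum>c\<in>(UNIV::'m set). (t c)^2)"
  by (simp add: power2_diff sum.distrib sum_subtractf sum_distrib_left)

lemma OS1:
  "(\<Sum>c\<in>UNIV. ((x - \<alpha> k *\<^sub>R grad_f A b c x - xs) \<bullet> v l)^2) / real CARD('m)
    \<le> Afun (\<sigma> l) (\<alpha> k) * ((x - xs) \<bullet> v l)^2
      + Bfun (real CARD('m)) L (\<sigma> 1) (\<sigma> CARD('n)) (\<alpha> k) * (norm (x - xs))^2
      + Cfun (real CARD('m)) L (lsF A b xs) (\<alpha> k)"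
proof -
  define M where "M = real CARD('m)"
  define a where "a = \<alpha> k"
  define e where "e = x - xs"
  define D where "D = A *v x - b"
  define E where "E = e \<bullet> v l"
  define w where "w c = A$c \<bullet> v l" for c
  have M0: "M > 0" by (simp add: M_def)
  have a0: "a > 0" using alpha_pos by (simp add: a_def)
  have lN: "l \<in> {1..CARD('n)}" using l by auto
  have trm: "(x - a *\<^sub>R grad_f A b c x - xs) \<bullet> v l = E - a * M * D$c * w c" for c
    by (simp add: grad_f_def E_def e_def D_def D_comp w_def M_def inner_diff_left Av_comp algebra_simps)
  have S1: "(\<Sum>c\<in>UNIV. D$c * w c) = (\<sigma> l)^2 * E"
  proof -
    have "(\<Sum>c\<in>UNIV. D$c * w c) = (A *v e) \<bullet> (A *v v l)"
      unfolding D_def w_def e_def by (rule sum_Dw)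
    also have "\<dots> = e \<bullet> (transpose A *v (A *v v l))" by (rule inner_Av)
    also have "\<dots> = (\<sigma> l)^2 * E" using sv lN by (simp add: E_def)
    finally show ?thesis .
  qed
  have S2: "(\<Sum>c\<in>UNIV. (D$c)^2 * (w c)^2) \<le> L * (D \<bullet> D)"
  proof -
    have "(\<Sum>c\<in>UNIV. (D$c)^2 * (w c)^2) \<le> (\<Sum>c\<in>UNIV. (D$c)^2 * L)"
      by (rule sum_mono) (simp add: mult_left_mono w_def w_le[OF lN])
    also have "\<dots> = L * (D \<bullet> D)" by (simp add: inner_vec_sum sum_distrib_left power2_eq_square algebra_simps)
    finally show ?thesis .
  qed
  have DD': "D \<bullet> D \<le> (\<sigma> 1)^2 * (e \<bullet> e) + 2 * lsF A b xs"
    unfolding D_def DD Fstar using Ay_upper[of "x - xs"] by (simp add: e_def)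
  have sum_eq: "(\<Sum>c\<in>UNIV. ((x - a *\<^sub>R grad_f A b c x - xs) \<bullet> v l)^2)
      = M * E^2 - 2 * E * (a * M * ((\<sigma> l)^2 * E)) + (a * M)^2 * (\<Sum>c\<in>UNIV. (D$c)^2 * (w c)^2)"
  proof -
    have s1: "(\<Sum>c\<in>UNIV. a * M * D$c * w c) = a * M * (\<Sum>c\<in>UNIV. D$c * w c)"
      by (simp add: sum_distrib_left mult.assoc)
    have s2: "(\<Sum>c\<in>UNIV. (a * M * D$c * w c)^2) = (a * M)^2 * (\<Sum>c\<in>UNIV. (D$c)^2 * (w c)^2)"
      by (simp add: sum_distrib_left power_mult_distrib mult.assoc)
    show ?thesis unfolding trm sq_expand M_def[symmetric] s1 s2 S1 by simp
  qed
  have L0: "L > 0" by (rule L_pos)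
  have ratio: "(\<sigma> 1)^2 \<le> ((\<sigma> 1)^2 / (\<sigma> CARD('n))^2) * (\<sigma> 1)^2"
  proof -
    have "1 \<le> (\<sigma> 1)^2 / (\<sigma> CARD('n))^2" using sig1_ge sigN_pos by simp
    thus ?thesis by (metis mult_1 mult_right_mono zero_le_power2)
  qed
  have ee: "e \<bullet> e = (norm e)^2" by (simp add: power2_norm_eq_inner)
  have "(\<Sum>c\<in>UNIV. ((x - a *\<^sub>R grad_f A b c x - xs) \<bullet> v l)^2) / M
      = E^2 - 2 * a * (\<sigma> l)^2 * E^2 + a^2 * M * (\<Sum>c\<in>UNIV. (D$c)^2 * (w c)^2)"
    unfolding sum_eq using M0 by (simp add: field_simps power2_eq_square)
  also have "\<dots> \<le> E^2 - 2 * a * (\<sigma> l)^2 * E^2 + a^2 * M * (L * ((\<sigma> 1)^2 * (e \<bullet> e) + 2 * lsF A b xs))"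
  proof -
    have "(\<Sum>c\<in>UNIV. (D$c)^2 * (w c)^2) \<le> L * ((\<sigma> 1)^2 * (e \<bullet> e) + 2 * lsF A b xs)"
      using S2 DD' L0 by (meson mult_left_mono less_imp_le order.trans)
    thus ?thesis using M0 by (simp add: mult_left_mono)
  qed
  also have "\<dots> \<le> E^2 - 2 * a * (\<sigma> l)^2 * E^2 + a^2 * M * L * (((\<sigma> 1)^2 / (\<sigma> CARD('n))^2) * (\<sigma> 1)^2) * (e \<bullet> e) + 2 * a^2 * M * L * lsF A b xs"
  proof -
    have "a^2 * M * L * (\<sigma> 1)^2 * (e \<bullet> e) \<le> a^2 * M * L * (((\<sigma> 1)^2 / (\<sigma> CARD('n))^2) * (\<sigma> 1)^2) * (e \<bullet> e)"
      using ratio M0 L0 by (intro mult_right_mono mult_left_mono) auto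
    thus ?thesis by (simp add: algebra_simps)
  qed
  also have "\<dots> = Afun (\<sigma> l) a * E^2 + Bfun M L (\<sigma> 1) (\<sigma> CARD('n)) a * (norm e)^2 + Cfun M L (lsF A b xs) a"
    by (simp add: Afun_def Bfun_def Cfun_def ee algebra_simps)
  finally show ?thesis by (simp add: M_def a_def E_def e_def)
qed

lemma OS2:
  "(\<Sum>c\<in>UNIV. (norm (x - \<alpha> k *\<^sub>R grad_f A b c x - xs))^2) / real CARD('m)
    \<le> pfun (\<sigma> CARD('n)) (\<alpha> k) * (norm (x - xs))^2 + qfun (noise_var A b xs) (\<alpha> k)"
proof -
  define M where "M = real CARD('m)"
  define a where "a = \<alpha> k"
  define e where "e = x - xs"
  define D where "D = A *v x - b"
  have M0: "M > 0" by (simp add: M_def)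
  have a0: "a > 0" using alpha_pos by (simp add: a_def)
  have aML: "a * M * L \<le> 1/2" using alpha_ML by (simp add: a_def M_def)
  have L0: "L > 0" by (rule L_pos)
  define Ae where "Ae = (A *v e) \<bullet> (A *v e)"
  define R where "R = (\<Sum>c\<in>UNIV. (r$c)^2 * (norm (A$c))^2)"
  have trm: "(norm (x - a *\<^sub>R grad_f A b c x - xs))^2
     = e \<bullet> e - 2 * a * M * D$c * (A$c \<bullet> e) + (a * M)^2 * (D$c)^2 * (norm (A$c))^2" for c
  proof -
    have eq: "x - a *\<^sub>R grad_f A b c x - xs = e - (a * M * D$c) *\<^sub>R A$c"
      by (simp add: grad_f_def e_def D_def D_comp M_def Av_comp algebra_simps)
    show ?thesis unfolding eq power2_norm_eq_inner
      by (simp add: inner_diff_left inner_diff_right inner_commute power2_eq_square algebra_simps)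
  qed
  have S1: "(\<Sum>c\<in>UNIV. D$c * (A$c \<bullet> e)) = Ae"
    unfolding D_def Ae_def e_def by (rule sum_Dw)
  have Dc: "D$c = A$c \<bullet> e + r$c" for c
    by (simp add: D_def D_eq Av_comp e_def)
  have S2: "(\<Sum>c\<in>UNIV. (D$c)^2 * (norm (A$c))^2) \<le> 2 * L * Ae + 2 * R"
  proof -
    have "(\<Sum>c\<in>UNIV. (D$c)^2 * (norm (A$c))^2)
        \<le> (\<Sum>c\<in>UNIV. 2 * L * (A$c \<bullet> e)^2 + 2 * ((r$c)^2 * (norm (A$c))^2))"
    proof (rule sum_mono)
      fix c
      have "(D$c)^2 \<le> 2 * (A$c \<bullet> e)^2 + 2 * (r$c)^2"
        unfolding Dc by (smt (verit) power2_sum sum_squares_bound)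
      hence "(D$c)^2 * (norm (A$c))^2 \<le> (2 * (A$c \<bullet> e)^2 + 2 * (r$c)^2) * (norm (A$c))^2"
        by (simp add: mult_right_mono)
      also have "\<dots> = 2 * (A$c \<bullet> e)^2 * (norm (A$c))^2 + 2 * ((r$c)^2 * (norm (A$c))^2)"
        by (simp add: algebra_simps)
      also have "\<dots> \<le> 2 * (A$c \<bullet> e)^2 * L + 2 * ((r$c)^2 * (norm (A$c))^2)"
        using row_le_L[of c] by (simp add: mult_left_mono)
      finally show "(D$c)^2 * (norm (A$c))^2 \<le> 2 * L * (A$c \<bullet> e)^2 + 2 * ((r$c)^2 * (norm (A$c))^2)"
        by (simp add: algebra_simps)
    qed
    also have "\<dots> = 2 * L * Ae + 2 * R"
      by (simp add: Ae_def R_def Av_inner sum.distrib sum_distrib_left power2_eq_square)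
    finally show ?thesis .
  qed
  have nv: "noise_var A b xs = M * R"
  proof -
    have "noise_var A b xs = (1/M) * (\<Sum>c\<in>UNIV. M^2 * ((r$c)^2 * (norm (A$c))^2))"
      unfolding noise_var_def grad_f_def M_def[symmetric]
      by (simp add: r_comp power_mult_distrib mult.assoc)
    thus ?thesis using M0 by (simp add: R_def sum_distrib_left[symmetric] power2_eq_square)
  qed
  have sum_eq: "(\<Sum>c\<in>UNIV. (norm (x - a *\<^sub>R grad_f A b c x - xs))^2)
     = M * (e \<bullet> e) - 2 * a * M * Ae + (a * M)^2 * (\<Sum>c\<in>UNIV. (D$c)^2 * (norm (A$c))^2)"
    unfolding trm S1[symmetric]
    by (simp add: sum.distrib sum_subtractf sum_distrib_left M_def algebra_simps)
  have Ae0: "Ae \<ge> 0" by (simp add: Ae_def)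
  have "(\<Sum>c\<in>UNIV. (norm (x - a *\<^sub>R grad_f A b c x - xs))^2) / M
     = e \<bullet> e - 2 * a * Ae + a^2 * M * (\<Sum>c\<in>UNIV. (D$c)^2 * (norm (A$c))^2)"
    unfolding sum_eq using M0 by (simp add: field_simps power2_eq_square)
  also have "\<dots> \<le> e \<bullet> e - 2 * a * Ae + a^2 * M * (2 * L * Ae + 2 * R)"
    using S2 M0 by (simp add: mult_left_mono)
  also have "\<dots> = e \<bullet> e - 2 * a * Ae + 2 * a * (a * M * L) * Ae + 2 * a^2 * (M * R)"
    by (simp add: algebra_simps power2_eq_square)
  also have "\<dots> \<le> e \<bullet> e - 2 * a * Ae + 2 * a * (1/2) * Ae + 2 * a^2 * (M * R)"
  proof -
    have "2 * a * (a * M * L) * Ae \<le> 2 * a * (1/2) * Ae"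
      using aML a0 Ae0 by (intro mult_right_mono mult_left_mono) auto
    thus ?thesis by linarith
  qed
  also have "\<dots> = e \<bullet> e - a * Ae + 2 * a^2 * (M * R)" by simp
  also have "\<dots> \<le> e \<bullet> e - a * ((\<sigma> CARD('n))^2 * (e \<bullet> e)) + 2 * a^2 * (M * R)"
    using Ay_lower[of e] a0 by (simp add: Ae_def mult_left_mono)
  also have "\<dots> = pfun (\<sigma> CARD('n)) a * (norm e)^2 + qfun (noise_var A b xs) a"
    by (simp add: pfun_def qfun_def nv power2_norm_eq_inner algebra_simps)
  finally show ?thesis by (simp add: M_def a_def e_def)
qed

end



primrec Gf :: "('a \<Rightarrow> real) \<Rightarrow> (nat \<Rightarrow> 'm::finite \<Rightarrow> 'a \<Rightarrow> 'a) \<Rightarrow> nat \<Rightarrow> nat \<Rightarrow> 'a \<Rightarrow> real" where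
  "Gf \<phi> stp t 0 x = \<phi> x"
| "Gf \<phi> stp t (Suc d) x = (\<Sum>c\<in>UNIV. Gf \<phi> stp (Suc t) d (stp t c x)) / real CARD('m)"

lemma AcR: "k \<le> n \<Longrightarrow> Acoef sl \<alpha> n k = Afun sl (\<alpha> k) * Acoef sl \<alpha> n (Suc k)"
  by (simp add: Acoef_def prod.atLeast_Suc_atMost)

lemma Acoef_Suc_n: "Acoef sl \<alpha> n (Suc n) = 1"
  by (simp add: Acoef_def)

lemma BcR: "k \<le> n \<Longrightarrow> Bcoef sl m Lt s1 s2 \<alpha> n k
   = Acoef sl \<alpha> n (Suc k) * Bfun m Lt s1 s2 (\<alpha> k) + pfun s2 (\<alpha> k) * Bcoef sl m Lt s1 s2 \<alpha> n (Suc k)"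
proof -
  assume kn: "k \<le> n"
  have "Bcoef sl m Lt s1 s2 \<alpha> n k = (\<Prod>i=k+1..n. Afun sl (\<alpha> i)) * Bfun m Lt s1 s2 (\<alpha> k)
     + (\<Sum>j=Suc k..n. (\<Prod>i=j+1..n. Afun sl (\<alpha> i)) * Bfun m Lt s1 s2 (\<alpha> j) * (\<Prod>i=k..<j. pfun s2 (\<alpha> i)))"
    unfolding Bcoef_def using kn by (simp add: sum.atLeast_Suc_atMost)
  also have "(\<Sum>j=Suc k..n. (\<Prod>i=j+1..n. Afun sl (\<alpha> i)) * Bfun m Lt s1 s2 (\<alpha> j) * (\<Prod>i=k..<j. pfun s2 (\<alpha> i)))
     = (\<Sum>j=Suc k..n. pfun s2 (\<alpha> k) * ((\<Prod>i=j+1..n. Afun sl (\<alpha> i)) * Bfun m Lt s1 s2 (\<alpha> j) * (\<Prod>i=Suc k..<j. pfun s2 (\<alpha> i))))"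
    by (intro sum.cong refl) (simp add: prod.atLeast_Suc_lessThan)
  also have "\<dots> = pfun s2 (\<alpha> k) * Bcoef sl m Lt s1 s2 \<alpha> n (Suc k)"
    by (simp add: Bcoef_def sum_distrib_left)
  finally show ?thesis by (simp add: Acoef_def)
qed

lemma CcR: "k < n \<Longrightarrow> Ccoef sl m Lt s1 s2 Fs s2' \<alpha> n k
   = qfun s2' (\<alpha> k) * Bcoef sl m Lt s1 s2 \<alpha> n (Suc k) + Acoef sl \<alpha> n (Suc k) * Cfun m Lt Fs (\<alpha> k)
     + Ccoef sl m Lt s1 s2 Fs s2' \<alpha> n (Suc k)"
  unfolding Ccoef_def by (simp add: sum.atLeast_Suc_atMost)

lemma Acoef_nn: "Acoef sl \<alpha> n k = Acoef sl \<alpha> n k" ..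

context sgdloc begin

definition "stp t c x = x - \<alpha> t *\<^sub>R grad_f A b c x"
definition "phi x = ((x - xs) \<bullet> v l)^2"

lemma Acoef_nonneg: "Acoef (\<sigma> l) \<alpha> n k \<ge> 0"
  unfolding Acoef_def by (rule prod_nonneg) (use Afun_nonneg in auto)

lemma Bcoef_nonneg: "Bcoef (\<sigma> l) (real CARD('m)) L (\<sigma> 1) (\<sigma> CARD('n)) \<alpha> n k \<ge> 0"
  unfolding Bcoef_def
  by (intro sum_nonneg mult_nonneg_nonneg prod_nonneg) (use Afun_nonneg pfun_nonneg Bfun_nonneg in auto)

abbreviation "BB n k \<equiv> Bcoef (\<sigma> l) (real CARD('m)) L (\<sigma> 1) (\<sigma> CARD('n)) \<alpha> n k"
abbreviation "CC n k \<equiv> Ccoef (\<sigma> l) (real CARD('m)) L (\<sigma> 1) (\<sigma> CARD('n)) (lsF A b xs) (noise_var A b xs) \<alpha> n k"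

lemma G_bound: "k + d = n \<Longrightarrow> Gf phi stp k (Suc d) x
   \<le> Acoef (\<sigma> l) \<alpha> n k * ((x - xs) \<bullet> v l)^2 + BB n k * (norm (x - xs))^2 + CC n k"
proof (induction d arbitrary: k x)
  case 0
  hence kn: "k = n" by simp
  have "Gf phi stp k (Suc 0) x = (\<Sum>c\<in>UNIV. ((x - \<alpha> k *\<^sub>R grad_f A b c x - xs) \<bullet> v l)^2) / real CARD('m)"
    by (simp add: phi_def stp_def)
  also have "\<dots> \<le> Afun (\<sigma> l) (\<alpha> k) * ((x - xs) \<bullet> v l)^2
      + Bfun (real CARD('m)) L (\<sigma> 1) (\<sigma> CARD('n)) (\<alpha> k) * (norm (x - xs))^2
      + Cfun (real CARD('m)) L (lsF A b xs) (\<alpha> k)" by (rule OS1)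
  finally show ?case using kn
    by (simp add: Acoef_def Bcoef_def Ccoef_def)
next
  case (Suc d)
  hence kn: "k < n" and k1: "Suc k + d = n" by auto
  let ?A = "Acoef (\<sigma> l) \<alpha> n (Suc k)"
  let ?B = "BB n (Suc k)"
  let ?C = "CC n (Suc k)"
  let ?M = "real CARD('m)"
  have A0: "?A \<ge> 0" by (rule Acoef_nonneg)
  have B0: "?B \<ge> 0" by (rule Bcoef_nonneg)
  have "Gf phi stp k (Suc (Suc d)) x = (\<Sum>c\<in>UNIV. Gf phi stp (Suc k) (Suc d) (stp k c x)) / ?M"
    by simp
  also have "\<dots> \<le> (\<Sum>c\<in>UNIV. ?A * ((stp k c x - xs) \<bullet> v l)^2 + ?B * (norm (stp k c x - xs))^2 + ?C) / ?M"
    by (intro divide_right_mono sum_mono Suc.IH[OF k1]) auto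
  also have "\<dots> = ?A * ((\<Sum>c\<in>UNIV. ((stp k c x - xs) \<bullet> v l)^2) / ?M)
       + ?B * ((\<Sum>c\<in>UNIV. (norm (stp k c x - xs))^2) / ?M) + ?C"
    by (simp add: sum.distrib sum_distrib_left[symmetric] add_divide_distrib)
  also have "\<dots> \<le> ?A * (Afun (\<sigma> l) (\<alpha> k) * ((x - xs) \<bullet> v l)^2
      + Bfun ?M L (\<sigma> 1) (\<sigma> CARD('n)) (\<alpha> k) * (norm (x - xs))^2 + Cfun ?M L (lsF A b xs) (\<alpha> k))
      + ?B * (pfun (\<sigma> CARD('n)) (\<alpha> k) * (norm (x - xs))^2 + qfun (noise_var A b xs) (\<alpha> k)) + ?C"
    unfolding stp_def
    by (intro add_mono mult_left_mono OS1 OS2 A0 B0 order.refl)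
  also have "\<dots> = Acoef (\<sigma> l) \<alpha> n k * ((x - xs) \<bullet> v l)^2 + BB n k * (norm (x - xs))^2 + CC n k"
    using kn by (simp add: AcR BcR CcR algebra_simps)
  finally show ?case .
qed

end



abbreviation Mu :: "nat \<Rightarrow> ('m::finite) measure" where
  "Mu \<equiv> (\<lambda>_. measure_pmf (pmf_of_set (UNIV :: 'm set)))"

lemma idx_pps: "product_prob_space (Mu :: nat \<Rightarrow> ('m::finite) measure)"
  by (rule product_prob_spaceI) (auto intro: measure_pmf.prob_space_axioms)

lemma idx_space_eq: "idx_space = PiM UNIV Mu"
  by (simp add: idx_space_def)

lemma sgd_prefix: "(\<And>i. i < k \<Longrightarrow> \<omega> i = \<omega>' i) \<Longrightarrow> sgd A b x0 \<alpha> k \<omega> = sgd A b x0 \<alpha> k \<omega>'"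
  by (induction k) auto

lemma sgd_restrict: "k \<le> N \<Longrightarrow> sgd A b x0 \<alpha> k (restrict \<omega> {..<N}) = sgd A b x0 \<alpha> k \<omega>"
  by (rule sgd_prefix) auto

lemma grad_cont: "continuous_on UNIV (\<lambda>x. x - a *\<^sub>R grad_f A b c x)"
  unfolding grad_f_def by (intro continuous_intros)

lemma stp_meas: "(\<lambda>x. x - a *\<^sub>R grad_f A b c x) \<in> borel_measurable borel"
  by (rule borel_measurable_continuous_onI[OF grad_cont])

lemma sgd_meas: "{..<k} \<subseteq> I \<Longrightarrow> sgd A b x0 \<alpha> k \<in> borel_measurable (PiM I (Mu :: nat \<Rightarrow> ('m::finite) measure))"
proof (induction k)
  case 0 thus ?case by simp
next
  case (Suc k)
  have kI: "k \<in> I" using Suc.prems by auto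
  have "{..<k} \<subseteq> I" using Suc.prems by (auto simp: subset_eq)
  hence IH: "sgd A b x0 \<alpha> k \<in> borel_measurable (PiM I Mu)" by (rule Suc.IH)
  have comp: "(\<lambda>\<omega>. \<omega> k) \<in> measurable (PiM I (Mu :: nat \<Rightarrow> 'm measure)) (count_space UNIV)"
  proof -
    have "(\<lambda>\<omega>. \<omega> k) \<in> measurable (PiM I (Mu :: nat \<Rightarrow> 'm measure)) (Mu k)"
      using kI by (rule measurable_component_singleton)
    thus ?thesis by (simp add: measurable_cong_sets)
  qed
  have "(\<lambda>\<omega>. (\<lambda>c \<omega>. sgd A b x0 \<alpha> k \<omega> - \<alpha> k *\<^sub>R grad_f A b c (sgd A b x0 \<alpha> k \<omega>)) (\<omega> k) \<omega>)
        \<in> borel_measurable (PiM I Mu)"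
    by (rule measurable_compose_countable[OF _ comp])
       (rule measurable_compose[OF IH stp_meas])
  thus ?case by simp
qed

lemma space_PiM_Mu: "space (PiM J (Mu :: nat \<Rightarrow> ('m::finite) measure)) = PiE J (\<lambda>_. UNIV)"
  by (simp add: space_PiM)

lemma KL:
  fixes g :: "(nat \<Rightarrow> 'm::finite) \<Rightarrow> real"
  assumes J: "finite J"
    and gm: "g \<in> borel_measurable (PiM J Mu)"
    and gr: "\<And>\<omega>. g (restrict \<omega> J) = g \<omega>"
  shows "integrable idx_space g" "integral\<^sup>L idx_space g = integral\<^sup>L (PiM J Mu) g"
    "integrable (PiM J Mu) g"
proof -
  interpret PS: product_prob_space "Mu :: nat \<Rightarrow> 'm measure" UNIV by (rule idx_pps)
  have dist: "distr (PiM UNIV Mu) (PiM J Mu) (\<lambda>x. restrict x J) = PiM J (Mu :: nat \<Rightarrow> 'm measure)"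
    using J by (intro PS.distr_PiM_restrict_finite) auto
  have rm: "(\<lambda>x. restrict x J) \<in> measurable (PiM UNIV (Mu :: nat \<Rightarrow> 'm measure)) (PiM J Mu)"
    by (rule measurable_restrict_subset) simp
  have gP: "g \<in> borel_measurable (PiM UNIV Mu)"
    using measurable_comp[OF rm gm] gr by (simp add: comp_def)
  have fin: "finite (PiE J (\<lambda>_. UNIV :: 'm set))" using J by (simp add: finite_PiE)
  define B where "B = (\<Sum>x\<in>PiE J (\<lambda>_. UNIV :: 'm set). \<bar>g x\<bar>)"
  have bnd: "norm (g \<omega>) \<le> B" for \<omega>
  proof -
    have "restrict \<omega> J \<in> PiE J (\<lambda>_. UNIV :: 'm set)" by simp
    hence "\<bar>g (restrict \<omega> J)\<bar> \<le> B" unfolding B_def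
      by (rule member_le_sum[OF _ _ fin, where f="\<lambda>x. \<bar>g x\<bar>"]) auto
    thus ?thesis using gr by simp
  qed
  have "AE \<omega> in PiM UNIV Mu. norm (g \<omega>) \<le> B" by (rule AE_I2) (rule bnd)
  hence intP': "integrable (PiM UNIV (Mu :: nat \<Rightarrow> 'm measure)) g"
    by (rule PS.integrable_const_bound) (rule gP)
  thus intP: "integrable idx_space g" by (simp add: idx_space_eq)
  show "integral\<^sup>L idx_space g = integral\<^sup>L (PiM J Mu) g"
  proof -
    have "integral\<^sup>L (distr (PiM UNIV Mu) (PiM J Mu) (\<lambda>x. restrict x J)) g = integral\<^sup>L (PiM UNIV Mu) (\<lambda>x. g (restrict x J))"
      by (rule integral_distr[OF rm gm])
    hence "integral\<^sup>L (PiM J Mu) g = integral\<^sup>L (PiM UNIV Mu) (\<lambda>x. g (restrict x J))"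
      by (simp only: dist)
    also have "\<dots> = integral\<^sup>L idx_space g" using gr by (simp add: idx_space_eq)
    finally show ?thesis by simp
  qed
  show "integrable (PiM J Mu) g"
  proof -
    have "integrable (distr (PiM UNIV Mu) (PiM J Mu) (\<lambda>x. restrict x J)) g"
      using intP' gr by (simp add: integrable_distr_eq[OF rm gm])
    thus ?thesis by (simp only: dist)
  qed
qed




lemma ind_meas: "B \<in> sets borel \<Longrightarrow> {..<k} \<subseteq> I \<Longrightarrow>
   (\<lambda>\<omega>. indicator B (sgd A b x0 \<alpha> k \<omega>) :: real) \<in> borel_measurable (PiM I (Mu :: nat \<Rightarrow> ('m::finite) measure))"
  by (rule measurable_compose[OF sgd_meas borel_measurable_indicator])

lemma fsgd_meas: "f \<in> borel_measurable borel \<Longrightarrow> {..<k} \<subseteq> I \<Longrightarrow>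
   (\<lambda>\<omega>. f (sgd A b x0 \<alpha> k \<omega>) :: real) \<in> borel_measurable (PiM I (Mu :: nat \<Rightarrow> ('m::finite) measure))"
  by (rule measurable_compose[OF sgd_meas])

lemma OSP:
  fixes B :: "(real^'n) set" and f :: "real^'n \<Rightarrow> real" and A :: "real^'n^'m::finite"
  assumes B: "B \<in> sets borel" and f: "f \<in> borel_measurable borel" and kj: "k \<le> j"
  shows "(\<integral>\<omega>. indicator B (sgd A b x0 \<alpha> k \<omega>) * f (sgd A b x0 \<alpha> (Suc j) \<omega>) \<partial>idx_space)
       = (\<integral>\<omega>. indicator B (sgd A b x0 \<alpha> k \<omega>) *
            ((\<Sum>c\<in>UNIV. f (sgd A b x0 \<alpha> j \<omega> - \<alpha> j *\<^sub>R grad_f A b c (sgd A b x0 \<alpha> j \<omega>))) / real CARD('m)) \<partial>idx_space)"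
proof -
  interpret PS: product_prob_space "Mu :: nat \<Rightarrow> 'm measure" UNIV by (rule idx_pps)
  define H where "H \<omega> = indicator B (sgd A b x0 \<alpha> k \<omega>) * f (sgd A b x0 \<alpha> (Suc j) \<omega>)" for \<omega>
  define K where "K \<omega> = indicator B (sgd A b x0 \<alpha> k \<omega>) *
            ((\<Sum>c\<in>UNIV. f (sgd A b x0 \<alpha> j \<omega> - \<alpha> j *\<^sub>R grad_f A b c (sgd A b x0 \<alpha> j \<omega>))) / real CARD('m))" for \<omega>
  have Hm: "H \<in> borel_measurable (PiM {..<Suc j} (Mu :: nat \<Rightarrow> 'm measure))"
    unfolding H_def using kj
    by (intro borel_measurable_times ind_meas fsgd_meas B f) auto
  have Km: "K \<in> borel_measurable (PiM {..<j} (Mu :: nat \<Rightarrow> 'm measure))"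
  proof -
    have "(\<lambda>\<omega>. f (sgd A b x0 \<alpha> j \<omega> - \<alpha> j *\<^sub>R grad_f A b c (sgd A b x0 \<alpha> j \<omega>))) \<in> borel_measurable (PiM {..<j} (Mu :: nat \<Rightarrow> 'm measure))" for c
      by (rule measurable_compose[OF sgd_meas measurable_compose[OF stp_meas f]]) simp
    thus ?thesis unfolding K_def using kj
      by (intro borel_measurable_times ind_meas B borel_measurable_divide borel_measurable_sum) auto
  qed
  have Hr: "H (restrict \<omega> {..<Suc j}) = H \<omega>" for \<omega>
    unfolding H_def using kj by (simp add: sgd_restrict)
  have Kr: "K (restrict \<omega> {..<j}) = K \<omega>" for \<omega>
    unfolding K_def using kj by (simp add: sgd_restrict)
  have "integral\<^sup>L idx_space H = integral\<^sup>L (PiM {..<Suc j} Mu) H"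
    by (rule KL(2)[OF _ Hm Hr]) simp
  also have "\<dots> = integral\<^sup>L (PiM (insert j {..<j}) Mu) H"
    by (simp add: lessThan_Suc)
  also have "\<dots> = (\<integral>x. (\<integral>y. H (x(j:=y)) \<partial>Mu j) \<partial>PiM {..<j} Mu)"
  proof (rule PS.product_integral_insert)
    show "integrable (PiM (insert j {..<j}) Mu) H"
      using KL(3)[OF _ Hm Hr] by (simp add: lessThan_Suc)
  qed auto
  also have "\<dots> = integral\<^sup>L (PiM {..<j} Mu) K"
  proof (rule Bochner_Integration.integral_cong[OF refl])
    fix x :: "nat \<Rightarrow> 'm"
    have e1: "sgd A b x0 \<alpha> k (x(j:=y)) = sgd A b x0 \<alpha> k x" for y
      using kj by (intro sgd_prefix) auto
    have e2: "sgd A b x0 \<alpha> j (x(j:=y)) = sgd A b x0 \<alpha> j x" for y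
      by (intro sgd_prefix) auto
    have "(\<integral>y. H (x(j:=y)) \<partial>Mu j) = (\<Sum>y\<in>UNIV. H (x(j:=y))) / real CARD('m)"
      by (subst integral_pmf_of_set) auto
    also have "\<dots> = K x"
      unfolding H_def K_def by (simp add: e1 e2 sum_distrib_left)
    finally show "(\<integral>y. H (x(j:=y)) \<partial>Mu j) = K x" .
  qed
  also have "\<dots> = integral\<^sup>L idx_space K"
    by (rule KL(2)[OF _ Km Kr, symmetric]) simp
  finally show ?thesis unfolding H_def K_def .
qed

context sgdloc begin

lemma phi_meas: "phi \<in> borel_measurable borel"
  unfolding phi_def by (intro borel_measurable_continuous_onI continuous_intros)

lemma Gf_meas: "Gf phi stp t d \<in> borel_measurable borel"
proof (induction d arbitrary: t)
  case 0 thus ?case using phi_meas by (simp add: fun_eq_iff[symmetric])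
next
  case (Suc d)
  have "(\<lambda>x. Gf phi stp (Suc t) d (stp t c x)) \<in> borel_measurable borel" for c
  proof -
    have "stp t c \<in> borel_measurable borel" unfolding stp_def by (rule stp_meas)
    thus ?thesis by (rule measurable_compose[OF _ Suc.IH])
  qed
  hence "(\<lambda>x. (\<Sum>c\<in>UNIV. Gf phi stp (Suc t) d (stp t c x)) / real CARD('m)) \<in> borel_measurable borel"
    by (intro borel_measurable_divide borel_measurable_sum) auto
  thus ?case by simp
qed

lemma Markov:
  assumes B: "B \<in> sets borel" and kj: "k \<le> j"
  shows "(\<integral>\<omega>. indicator B (sgd A b x0 \<alpha> k \<omega>) * phi (sgd A b x0 \<alpha> (j + d) \<omega>) \<partial>idx_space)
       = (\<integral>\<omega>. indicator B (sgd A b x0 \<alpha> k \<omega>) * Gf phi stp j d (sgd A b x0 \<alpha> j \<omega>) \<partial>idx_space)"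
  using kj
proof (induction d arbitrary: j)
  case 0 thus ?case by simp
next
  case (Suc d)
  have "(\<integral>\<omega>. indicator B (sgd A b x0 \<alpha> k \<omega>) * phi (sgd A b x0 \<alpha> (j + Suc d) \<omega>) \<partial>idx_space)
      = (\<integral>\<omega>. indicator B (sgd A b x0 \<alpha> k \<omega>) * phi (sgd A b x0 \<alpha> (Suc j + d) \<omega>) \<partial>idx_space)"
    by simp
  also have "\<dots> = (\<integral>\<omega>. indicator B (sgd A b x0 \<alpha> k \<omega>) * Gf phi stp (Suc j) d (sgd A b x0 \<alpha> (Suc j) \<omega>) \<partial>idx_space)"
    by (rule Suc.IH) (use Suc.prems in simp)
  also have "\<dots> = (\<integral>\<omega>. indicator B (sgd A b x0 \<alpha> k \<omega>) * Gf phi stp j (Suc d) (sgd A b x0 \<alpha> j \<omega>) \<partial>idx_space)"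
    by (subst OSP[OF B Gf_meas Suc.prems]) (simp add: stp_def)
  finally show ?case .
qed

end



lemma fm_idx: "finite_measure (idx_space :: (nat \<Rightarrow> 'm::finite) measure)"
proof -
  interpret PS: product_prob_space "Mu :: nat \<Rightarrow> 'm measure" UNIV by (rule idx_pps)
  show ?thesis unfolding idx_space_eq by (rule PS.P.finite_measure_axioms)
qed

lemma meas_idx: "measure (idx_space :: (nat \<Rightarrow> 'm::finite) measure) (space idx_space) = 1"
proof -
  interpret PS: product_prob_space "Mu :: nat \<Rightarrow> 'm measure" UNIV by (rule idx_pps)
  show ?thesis unfolding idx_space_eq by (rule PS.P.prob_space)
qed

context sgdloc begin

lemma condexp_eq:
  assumes kn: "k \<le> n"
  shows "AE \<omega> in idx_space.
     real_cond_exp idx_space (vimage_algebra (space idx_space) (sgd A b x0 \<alpha> k) borel)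
        (\<lambda>\<omega>. ((sgd A b x0 \<alpha> (Suc n) \<omega> - xs) \<bullet> v l)^2) \<omega>
     = Gf phi stp k (Suc n - k) (sgd A b x0 \<alpha> k \<omega>)"
proof -
  interpret PS: product_prob_space "Mu :: nat \<Rightarrow> 'm measure" UNIV by (rule idx_pps)
  let ?S = "vimage_algebra (space idx_space) (sgd A b x0 \<alpha> k) borel"
  let ?F = "\<lambda>\<omega>. ((sgd A b x0 \<alpha> (Suc n) \<omega> - xs) \<bullet> v l)^2"
  let ?g = "\<lambda>\<omega>. Gf phi stp k (Suc n - k) (sgd A b x0 \<alpha> k \<omega>)"
  have sgdP: "sgd A b x0 \<alpha> k \<in> borel_measurable idx_space"
    unfolding idx_space_eq by (rule sgd_meas) simp
  have sub: "subalgebra idx_space ?S"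
    unfolding subalgebra_def
  proof
    show "space ?S = space idx_space" by simp
    have "sets ?S = {sgd A b x0 \<alpha> k -` X \<inter> space idx_space |X. X \<in> sets borel}"
      by (rule sets_vimage_algebra2) simp
    thus "sets ?S \<subseteq> sets idx_space"
      using measurable_sets[OF sgdP] by auto
  qed
  have fm: "finite_measure idx_space" by (rule fm_idx)
  interpret FS: finite_measure_subalgebra idx_space ?S
    by (intro finite_measure_subalgebra.intro fm finite_measure_subalgebra_axioms.intro sub)
  show ?thesis
  proof (rule FS.real_cond_exp_charact)
    fix X assume X: "X \<in> sets ?S"
    then obtain Bo where Bo: "Bo \<in> sets borel" and XB: "X = sgd A b x0 \<alpha> k -` Bo \<inter> space idx_space"
      using sets_vimage_algebra2[of "sgd A b x0 \<alpha> k" "space idx_space" borel] by auto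
    have ind: "indicator X \<omega> = (indicator Bo (sgd A b x0 \<alpha> k \<omega>) :: real)" if "\<omega> \<in> space idx_space" for \<omega>
      using that unfolding XB by (simp add: indicator_def)
    have "(\<integral>\<omega>\<in>X. ?F \<omega> \<partial>idx_space) = (\<integral>\<omega>. indicator Bo (sgd A b x0 \<alpha> k \<omega>) * phi (sgd A b x0 \<alpha> (k + (Suc n - k)) \<omega>) \<partial>idx_space)"
      unfolding set_lebesgue_integral_def using kn
      by (intro Bochner_Integration.integral_cong refl) (simp add: ind phi_def)
    also have "\<dots> = (\<integral>\<omega>. indicator Bo (sgd A b x0 \<alpha> k \<omega>) * ?g \<omega> \<partial>idx_space)"
      by (rule Markov[OF Bo order.refl])
    also have "\<dots> = (\<integral>\<omega>\<in>X. ?g \<omega> \<partial>idx_space)"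
      unfolding set_lebesgue_integral_def
      by (intro Bochner_Integration.integral_cong refl) (simp add: ind)
    finally show "(\<integral>\<omega>\<in>X. ?F \<omega> \<partial>idx_space) = (\<integral>\<omega>\<in>X. ?g \<omega> \<partial>idx_space)" .
  next
    have m: "?F \<in> borel_measurable (PiM {..<Suc n} Mu)"
      using fsgd_meas[OF phi_meas, of "Suc n" "{..<Suc n}"] by (simp add: phi_def)
    show "integrable idx_space ?F"
      by (rule KL(1)[OF _ m]) (simp_all add: sgd_restrict)
  next
    have m: "?g \<in> borel_measurable (PiM {..<k} Mu)"
      by (rule fsgd_meas[OF Gf_meas]) simp
    show "integrable idx_space ?g"
      by (rule KL(1)[OF _ m]) (simp_all add: sgd_restrict)
  next
    show "?g \<in> borel_measurable ?S"
      by (rule measurable_compose[OF measurable_vimage_algebra1 Gf_meas]) simp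
  qed
qed

theorem main:
  "(\<forall>k\<le>n. AE \<omega> in idx_space.
            real_cond_exp idx_space (vimage_algebra (space idx_space) (sgd A b x0 \<alpha> k) borel)
              (\<lambda>\<omega>. ((sgd A b x0 \<alpha> (Suc n) \<omega> - xs) \<bullet> v l)^2) \<omega>
            \<le> Acoef (\<sigma> l) \<alpha> n k * ((sgd A b x0 \<alpha> k \<omega> - xs) \<bullet> v l)^2
              + Bcoef (\<sigma> l) (real CARD('m)) (Ltil A) (\<sigma> 1) (\<sigma> CARD('n)) \<alpha> n k
                  * (norm (sgd A b x0 \<alpha> k \<omega> - xs))^2
              + Ccoef (\<sigma> l) (real CARD('m)) (Ltil A) (\<sigma> 1) (\<sigma> CARD('n)) (lsF A b xs)
                  (noise_var A b xs) \<alpha> n k)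
       \<and> (\<integral>\<omega>. ((sgd A b x0 \<alpha> (Suc n) \<omega> - xs) \<bullet> v l)^2 \<partial>idx_space)
            \<le> Acoef (\<sigma> l) \<alpha> n 0 * ((x0 - xs) \<bullet> v l)^2
              + Bcoef (\<sigma> l) (real CARD('m)) (Ltil A) (\<sigma> 1) (\<sigma> CARD('n)) \<alpha> n 0 * (norm (x0 - xs))^2
              + Ccoef (\<sigma> l) (real CARD('m)) (Ltil A) (\<sigma> 1) (\<sigma> CARD('n)) (lsF A b xs)
                  (noise_var A b xs) \<alpha> n 0"
proof (intro conjI allI impI)
  fix k assume kn: "k \<le> n"
  have sn: "Suc n - k = Suc (n - k)" using kn by simp
  show "AE \<omega> in idx_space.
            real_cond_exp idx_space (vimage_algebra (space idx_space) (sgd A b x0 \<alpha> k) borel)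
              (\<lambda>\<omega>. ((sgd A b x0 \<alpha> (Suc n) \<omega> - xs) \<bullet> v l)^2) \<omega>
            \<le> Acoef (\<sigma> l) \<alpha> n k * ((sgd A b x0 \<alpha> k \<omega> - xs) \<bullet> v l)^2
              + Bcoef (\<sigma> l) (real CARD('m)) (Ltil A) (\<sigma> 1) (\<sigma> CARD('n)) \<alpha> n k
                  * (norm (sgd A b x0 \<alpha> k \<omega> - xs))^2
              + Ccoef (\<sigma> l) (real CARD('m)) (Ltil A) (\<sigma> 1) (\<sigma> CARD('n)) (lsF A b xs)
                  (noise_var A b xs) \<alpha> n k"
    using condexp_eq[OF kn]
  proof (rule eventually_mono)
    fix \<omega> assume eq: "real_cond_exp idx_space (vimage_algebra (space idx_space) (sgd A b x0 \<alpha> k) borel)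
        (\<lambda>\<omega>. ((sgd A b x0 \<alpha> (Suc n) \<omega> - xs) \<bullet> v l)^2) \<omega>
     = Gf phi stp k (Suc n - k) (sgd A b x0 \<alpha> k \<omega>)"
    show "real_cond_exp idx_space (vimage_algebra (space idx_space) (sgd A b x0 \<alpha> k) borel)
              (\<lambda>\<omega>. ((sgd A b x0 \<alpha> (Suc n) \<omega> - xs) \<bullet> v l)^2) \<omega>
            \<le> Acoef (\<sigma> l) \<alpha> n k * ((sgd A b x0 \<alpha> k \<omega> - xs) \<bullet> v l)^2
              + Bcoef (\<sigma> l) (real CARD('m)) (Ltil A) (\<sigma> 1) (\<sigma> CARD('n)) \<alpha> n k
                  * (norm (sgd A b x0 \<alpha> k \<omega> - xs))^2
              + Ccoef (\<sigma> l) (real CARD('m)) (Ltil A) (\<sigma> 1) (\<sigma> CARD('n)) (lsF A b xs)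
                  (noise_var A b xs) \<alpha> n k"
      unfolding eq sn using kn by (intro G_bound) simp
  qed
next
  interpret PS: product_prob_space "Mu :: nat \<Rightarrow> 'm measure" UNIV by (rule idx_pps)
  have U: "(UNIV :: (real^'n) set) \<in> sets borel" by simp
  have "(\<integral>\<omega>. ((sgd A b x0 \<alpha> (Suc n) \<omega> - xs) \<bullet> v l)^2 \<partial>idx_space)
      = (\<integral>\<omega>. indicator UNIV (sgd A b x0 \<alpha> 0 \<omega>) * phi (sgd A b x0 \<alpha> (0 + Suc n) \<omega>) \<partial>idx_space)"
    by (simp add: phi_def)
  also have "\<dots> = (\<integral>\<omega>. indicator UNIV (sgd A b x0 \<alpha> 0 \<omega>) * Gf phi stp 0 (Suc n) (sgd A b x0 \<alpha> 0 \<omega>) \<partial>idx_space)"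
    by (rule Markov[OF U order.refl])
  also have "\<dots> = Gf phi stp 0 (Suc n) x0"
    by (simp add: meas_idx)
  also have "\<dots> \<le> Acoef (\<sigma> l) \<alpha> n 0 * ((x0 - xs) \<bullet> v l)^2
              + Bcoef (\<sigma> l) (real CARD('m)) (Ltil A) (\<sigma> 1) (\<sigma> CARD('n)) \<alpha> n 0 * (norm (x0 - xs))^2
              + Ccoef (\<sigma> l) (real CARD('m)) (Ltil A) (\<sigma> 1) (\<sigma> CARD('n)) (lsF A b xs)
                  (noise_var A b xs) \<alpha> n 0"
    by (rule G_bound[of 0 n n x0]) simp
  finally show "(\<integral>\<omega>. ((sgd A b x0 \<alpha> (Suc n) \<omega> - xs) \<bullet> v l)^2 \<partial>idx_space)
            \<le> Acoef (\<sigma> l) \<alpha> n 0 * ((x0 - xs) \<bullet> v l)^2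
              + Bcoef (\<sigma> l) (real CARD('m)) (Ltil A) (\<sigma> 1) (\<sigma> CARD('n)) \<alpha> n 0 * (norm (x0 - xs))^2
              + Ccoef (\<sigma> l) (real CARD('m)) (Ltil A) (\<sigma> 1) (\<sigma> CARD('n)) (lsF A b xs)
                  (noise_var A b xs) \<alpha> n 0" .
qed

end


theorem lemma11:
  fixes A :: "real^'n^'m" and b :: "real^'m" and xs x0 :: "real^'n"
    and \<sigma> :: "nat \<Rightarrow> real" and v :: "nat \<Rightarrow> real^'n"
    and \<alpha> :: "nat \<Rightarrow> real" and l n :: nat
  assumes MN: "CARD('m) \<ge> CARD('n)"
    and rk: "rank A = CARD('n)"
    and xs_min: "\<forall>y. lsF A b xs \<le> lsF A b y"
    and orth: "\<forall>i\<in>{1..CARD('n)}. \<forall>j\<in>{1..CARD('n)}. v i \<bullet> v j = (if i = j then 1 else 0)"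
    and sv: "\<forall>j\<in>{1..CARD('n)}. transpose A *v (A *v v j) = (\<sigma> j)^2 *\<^sub>R v j"
    and sv_pos: "\<forall>j\<in>{1..CARD('n)}. \<sigma> j > 0"
    and sv_ord: "\<forall>i\<in>{1..CARD('n)}. \<forall>j\<in>{1..CARD('n)}. i \<le> j \<longrightarrow> \<sigma> j \<le> \<sigma> i"
    and step: "\<forall>k. 0 < \<alpha> k \<and> \<alpha> k \<le> 1 / (2 * real CARD('m) * Ltil A)"
    and l: "1 \<le> l" "l \<le> CARD('n)"
  shows "(\<forall>k\<le>n. AE \<omega> in idx_space.
            real_cond_exp idx_space (vimage_algebra (space idx_space) (sgd A b x0 \<alpha> k) borel)
              (\<lambda>\<omega>. ((sgd A b x0 \<alpha> (Suc n) \<omega> - xs) \<bullet> v l)^2) \<omega>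
            \<le> Acoef (\<sigma> l) \<alpha> n k * ((sgd A b x0 \<alpha> k \<omega> - xs) \<bullet> v l)^2
              + Bcoef (\<sigma> l) (real CARD('m)) (Ltil A) (\<sigma> 1) (\<sigma> CARD('n)) \<alpha> n k
                  * (norm (sgd A b x0 \<alpha> k \<omega> - xs))^2
              + Ccoef (\<sigma> l) (real CARD('m)) (Ltil A) (\<sigma> 1) (\<sigma> CARD('n)) (lsF A b xs)
                  (noise_var A b xs) \<alpha> n k)
       \<and> (\<integral>\<omega>. ((sgd A b x0 \<alpha> (Suc n) \<omega> - xs) \<bullet> v l)^2 \<partial>idx_space)
            \<le> Acoef (\<sigma> l) \<alpha> n 0 * ((x0 - xs) \<bullet> v l)^2
              + Bcoef (\<sigma> l) (real CARD('m)) (Ltil A) (\<sigma> 1) (\<sigma> CARD('n)) \<alpha> n 0 * (norm (x0 - xs))^2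
              + Ccoef (\<sigma> l) (real CARD('m)) (Ltil A) (\<sigma> 1) (\<sigma> CARD('n)) (lsF A b xs)
                  (noise_var A b xs) \<alpha> n 0"
  proof -
  interpret sgdloc A b xs \<sigma> v \<alpha> l
    using xs_min orth sv sv_pos sv_ord step l by unfold_locales auto
  show ?thesis by (rule main)
qed

end
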